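(* Let $p\ge3$ be prime, $d,R\in\mathbb{Q}$, $d\ne0$, $R$ not a square, $D=d^2-R$. If $f_p=f_p(Z,d,R)$ has no zero in $\mathbb{Q}$, then $f_p$ is irreducible in $\mathbb{Q}[Z]$.
   Context: $f_p(Z,d,R)=\sum_{j=0}^{(p-1)/2}(-1)^j\frac{p}{p-j}\binom{p-j}{j}D^jZ^{p-2j}-2dD^{(p-1)/2}$, which equals $\sqrt D^{\,p}F_p(Z/\sqrt D)-2dD^{(p-1)/2}$ where $F_p(Z)=2T_p(Z/2)$ and $T_p$ is the Chebyshev polynomial of the first kind. *)

theory Defs
  imports "HOL-Computational_Algebra.Polynomial" "HOL-Computational_Algebra.Polynomial_Factorial"
begin

definition fpoly :: "nat \<Rightarrow> rat \<Rightarrow> rat \<Rightarrow> rat poly" where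
  "fpoly p d R =
     (let D = d^2 - R in
       (\<Sum>j\<le>(p - 1) div 2.
          monom ((-1)^j * (of_nat p / of_nat (p - j)) * of_nat ((p - j) choose j) * D^j) (p - 2*j))
       - [: 2 * d * D ^ ((p - 1) div 2) :])"

end

theory Submission imports Defs "HOL-Computational_Algebra.Fundamental_Theorem_Algebra" begin


definition cc :: "nat \<Rightarrow> nat \<Rightarrow> complex" where
  "cc n j = of_nat n / of_nat (n - j) * of_nat ((n - j) choose j)"

lemma cc_zero: "n < 2 * j \<Longrightarrow> cc n j = 0"
  unfolding cc_def by (cases "n - j < j") (auto simp: binomial_eq_0)

lemma aux_field:
  fixes M I B :: complex
  assumes "M + 1 \<noteq> 0" "I + 1 \<noteq> 0"
  shows "(M + I + 3) * B / (I + 1) = (M + I + 2) * (M + 1 - I) * B / ((M + 1) * (I + 1)) + (M + I + 1) * B / (M + 1)"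
proof -
  have "(M + I + 3) * B / (I + 1) = ((M + I + 3) * (M + 1)) * B / ((M + 1) * (I + 1))"
    using assms by simp
  also have "(M + I + 3) * (M + 1) = (M + I + 2) * (M + 1 - I) + (M + I + 1) * (I + 1)"
    by (simp add: algebra_simps)
  finally have e: "(M + I + 3) * B / (I + 1) = ((M + I + 2) * (M + 1 - I) + (M + I + 1) * (I + 1)) * B / ((M + 1) * (I + 1))" .
  have e2: "(M + I + 1) * (I + 1) * B / ((M + 1) * (I + 1)) = (M + I + 1) * B / (M + 1)"
    using assms by simp
  have g: "\<And>x y z :: complex. (x + y) * B / z = x * B / z + y * B / z"
    by (simp add: add_divide_distrib distrib_right)
  note e
  also have "((M + I + 2) * (M + 1 - I) + (M + I + 1) * (I + 1)) * B / ((M + 1) * (I + 1))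
     = (M + I + 2) * (M + 1 - I) * B / ((M + 1) * (I + 1)) + (M + I + 1) * (I + 1) * B / ((M + 1) * (I + 1))"
    by (rule g)
  also note e2
  finally show ?thesis .
qed

lemma cc_rec:
  assumes "1 \<le> n" "1 \<le> j"
  shows "cc (n+2) j = cc (n+1) j + cc n (j-1)"
proof (cases "j \<le> n")
  case False
  then show ?thesis using assms by (auto simp: cc_def binomial_eq_0)
next
  case True
  obtain i where i: "j = Suc i" using assms by (cases j) auto
  define m where "m = n - j"
  have n: "n = m + i + 1" using True i m_def by simp
  have e1: "n + 2 - j = m + 2" "n + 1 - j = m + 1" "n - (j - 1) = m + 1" using n i by auto
  define B where "B = (m + 1 choose i)"
  have b1: "of_nat (m+2 choose (i+1)) * (of_nat i + 1) = (of_nat m + 2) * (of_nat B :: complex)"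
    using Suc_times_binomial[of i "m+1"] unfolding B_def
    by (metis (no_types, lifting) Suc_eq_plus1 add_Suc_right mult.commute of_nat_1 of_nat_Suc of_nat_add of_nat_mult one_add_one)
  have b2: "of_nat (m+1 choose (i+1)) * (of_nat i + 1) = (of_nat m + 1 - of_nat i) * (of_nat B :: complex)"
  proof (cases "i \<le> m + 1")
    case True
    have "(m+1 choose (i+1)) * (i + 1) = (m + 1 - i) * B"
      unfolding B_def using binomial_absorb_comp[of "m+1" i] True
      by (metis Suc_eq_plus1 Suc_times_binomial_eq binomial_absorption mult.commute)
    then have "of_nat ((m+1 choose (i+1)) * (i + 1)) = (of_nat ((m + 1 - i) * B) :: complex)" by simp
    then show ?thesis using True
      by (simp only: of_nat_mult of_nat_add of_nat_1 of_nat_diff[OF True])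
  next
    case False
    then show ?thesis by (simp add: B_def binomial_eq_0)
  qed
  have p1: "(of_nat m + 1 :: complex) \<noteq> 0" "(of_nat i + 1 :: complex) \<noteq> 0"
    by (metis of_nat_Suc of_nat_eq_0_iff add.commute nat.distinct(1))+
  have p2: "(of_nat m + 2 :: complex) \<noteq> 0"
    by (metis of_nat_add of_nat_eq_0_iff add_is_0 numeral_2_eq_2 of_nat_numeral zero_neq_numeral)
  have x1: "of_nat (m+2 choose (i+1)) = (of_nat m + 2) * of_nat B / (of_nat i + 1 :: complex)"
  proof -
    obtain X :: complex where X: "X = of_nat (m+2 choose (i+1))" by blast
    show ?thesis using b1 p1 unfolding X[symmetric] by (simp add: field_simps)
  qed
  have x2: "of_nat (m+1 choose (i+1)) = (of_nat m + 1 - of_nat i) * of_nat B / (of_nat i + 1 :: complex)"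
  proof -
    obtain X :: complex where X: "X = of_nat (m+1 choose (i+1))" by blast
    show ?thesis using b2 p1 unfolding X[symmetric] by (simp add: field_simps)
  qed
  have "cc (n+2) j = (of_nat m + of_nat i + 3) / (of_nat m + 2) * of_nat (m+2 choose (i+1))"
    unfolding cc_def e1 by (simp add: n i algebra_simps)
  also have "\<dots> = (of_nat m + of_nat i + 3) * of_nat B / (of_nat i + 1)"
    unfolding x1 using p2 by simp
  finally have l: "cc (n+2) j = (of_nat m + of_nat i + 3) * of_nat B / (of_nat i + 1)" .
  have "cc (n+1) j = (of_nat m + of_nat i + 2) / (of_nat m + 1) * of_nat (m+1 choose (i+1))"
    unfolding cc_def e1 by (simp add: n i algebra_simps)
  also have "\<dots> = (of_nat m + of_nat i + 2) * (of_nat m + 1 - of_nat i) * of_nat B / ((of_nat m + 1) * (of_nat i + 1))"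
    unfolding x2 by simp
  finally have r1: "cc (n+1) j = (of_nat m + of_nat i + 2) * (of_nat m + 1 - of_nat i) * of_nat B / ((of_nat m + 1) * (of_nat i + 1))" .
  have r2: "cc n (j-1) = (of_nat m + of_nat i + 1) * of_nat B / (of_nat m + 1)"
    unfolding cc_def e1 B_def by (simp add: n i algebra_simps)
  show ?thesis unfolding l r1 r2 by (rule aux_field[OF p1])
qed

definition TT :: "nat \<Rightarrow> complex \<Rightarrow> complex \<Rightarrow> complex" where
  "TT n a t = (\<Sum>j\<le>n. (-1)^j * cc n j * a^j * t^(n - 2*j))"

lemma cc_0: "1 \<le> n \<Longrightarrow> cc n 0 = 1"
  by (simp add: cc_def)

lemma TT_rec:
  assumes "1 \<le> n"
  shows "TT (n+2) a t = t * TT (n+1) a t - a * TT n a t"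
proof -
  define X where "X j = (-1)^j * cc (n+1) j * a^j * t^(n+2-2*j)" for j
  define Y where "Y j = (-1)^j * cc n j * a^(j+1) * t^(n - 2*j)" for j
  have tX: "t * TT (n+1) a t = (\<Sum>j\<le>n+1. X j)"
    unfolding TT_def sum_distrib_left
  proof (rule sum.cong[OF refl])
    fix j assume "j \<in> {..n+1}"
    show "t * ((-1)^j * cc (n+1) j * a^j * t^(n + 1 - 2*j)) = X j"
    proof (cases "2 * j \<le> n + 1")
      case True
      then have "n+2-2*j = Suc (n+1-2*j)" by simp
      then have "t^(n+2-2*j) = t * t^(n+1-2*j)" by simp
      then show ?thesis unfolding X_def by simp
    next
      case False
      then show ?thesis unfolding X_def by (simp add: cc_zero)
    qed
  qed
  also have "\<dots> = (\<Sum>j\<le>n+2. X j)"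
    by (simp add: X_def cc_zero)
  also have "\<dots> = X 0 + (\<Sum>j\<le>n+1. X (Suc j))"
    by (simp add: sum.atMost_Suc_shift del: sum.atMost_Suc)
  finally have tX': "t * TT (n+1) a t = X 0 + (\<Sum>j\<le>n+1. X (Suc j))" .
  have aY: "a * TT n a t = (\<Sum>j\<le>n+1. Y j)"
    unfolding TT_def sum_distrib_left by (simp add: Y_def cc_zero mult_ac)
  have "TT (n+2) a t = (-1)^0 * cc (n+2) 0 * a^0 * t^(n+2-2*0)
      + (\<Sum>j\<le>n+1. (-1)^(Suc j) * cc (n+2) (Suc j) * a^(Suc j) * t^(n+2-2*(Suc j)))"
    unfolding TT_def by (simp add: sum.atMost_Suc_shift del: sum.atMost_Suc)
  also have "\<dots> = X 0 + (\<Sum>j\<le>n+1. X (Suc j) - Y j)"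
  proof -
    have "(-1)^(Suc j) * cc (n+2) (Suc j) * a^(Suc j) * t^(n+2-2*(Suc j)) = X (Suc j) - Y j" for j
    proof -
      have "cc (n+2) (Suc j) = cc (n+1) (Suc j) + cc n j"
        using cc_rec[OF assms, of "Suc j"] by simp
      moreover have "n + 2 - 2 * Suc j = n - 2 * j" by simp
      moreover have "n + 2 - 2 * Suc j = n + 1 + 1 - 2 * Suc j" by simp
      ultimately show ?thesis unfolding X_def Y_def by (simp add: ring_distribs)
    qed
    moreover have "(-1)^0 * cc (n+2) 0 * a^0 * t^(n+2-2*0) = X 0"
      using assms by (simp add: X_def cc_0)
    ultimately show ?thesis by simp
  qed
  also have "\<dots> = t * TT (n+1) a t - a * TT n a t"
    unfolding tX' aY sum_subtractf by simp
  finally show ?thesis .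
qed


lemma dickson:
  fixes y a :: complex
  assumes "y \<noteq> 0" "1 \<le> n"
  shows "TT n a (y + a / y) = y^n + (a/y)^n"
proof -
  have "\<forall>n. 1 \<le> n \<longrightarrow> n \<le> m \<longrightarrow> TT n a (y + a / y) = y^n + (a/y)^n" for m
  proof (induction m)
    case 0 then show ?case by simp
  next
    case (Suc m)
    show ?case
    proof (intro allI impI)
      fix n assume n: "1 \<le> n" "n \<le> Suc m"
      show "TT n a (y + a / y) = y^n + (a/y)^n"
      proof (cases "n \<le> m")
        case True then show ?thesis using Suc n by blast
      next
        case False
        then have nm: "n = Suc m" using n by simp
        show ?thesis
        proof (cases "m \<le> 1")
          case True
          then have "n = 1 \<or> n = 2" using nm n by auto
          then show ?thesis
          proof
            assume "n = 1" then show ?thesis by (simp add: TT_def cc_def)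
          next
            assume n2: "n = 2"
            have "TT 2 a (y + a/y) = (y + a/y)^2 - 2 * a"
              by (simp add: TT_def cc_def numeral_2_eq_2)
            also have "\<dots> = y^2 + (a/y)^2" using assms(1) by (simp add: power2_eq_square field_simps)
            finally show ?thesis using n2 by simp
          qed
        next
          case False
          then obtain k where k: "m = k + 1" "1 \<le> k" by (metis add.commute le_add1 less_imp_Suc_add not_le plus_1_eq_Suc)
          have n': "n = k + 2" using nm k by simp
          have h1: "TT (k+1) a (y + a / y) = y^(k+1) + (a/y)^(k+1)" using Suc k by simp
          have h2: "TT k a (y + a / y) = y^k + (a/y)^k" using Suc k by simp
          have gen: "(u + b) * (u^(k+1) + b^(k+1)) - (u*b) * (u^k + b^k) = u^(k+2) + b^(k+2)" for u b :: complex
            by (simp add: algebra_simps)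
          have yb: "y * (a / y) = a" using assms(1) by simp
          show ?thesis unfolding n' TT_rec[OF k(2)] h1 h2
            using gen[of y "a/y"] unfolding yb by simp
        qed
      qed
    qed
  qed
  then show ?thesis using assms by blast
qed



abbreviation mq :: "rat poly \<Rightarrow> complex poly" where "mq \<equiv> map_poly of_rat"

lemma mq_add: "mq (p + q) = mq p + mq q"
  by (rule poly_eqI) (simp add: coeff_map_poly of_rat_add)
lemma mq_diff: "mq (p - q) = mq p - mq q"
  by (rule poly_eqI) (simp add: coeff_map_poly of_rat_diff)
lemma mq_mult: "mq (p * q) = mq p * mq q"
  by (rule poly_eqI) (simp add: coeff_map_poly coeff_mult of_rat_sum of_rat_mult)
lemma mq_sum: "mq (\<Sum>i\<in>A. f i) = (\<Sum>i\<in>A. mq (f i))"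
  by (induction A rule: infinite_finite_induct) (auto simp: mq_add)
lemma mq_const: "mq [:c:] = [:of_rat c:]"
  by (simp add: map_poly_pCons)
lemma mq_monom: "mq (monom c n) = monom (of_rat c) n"
  by (simp add: map_poly_monom)
lemma poly_mq: "poly (mq p) (of_rat x) = of_rat (poly p x)"
  by (simp add: poly_altdef coeff_map_poly of_rat_sum of_rat_mult of_rat_power degree_map_poly)

lemma fpoly_eval:
  assumes "odd p"
  shows "poly (mq (fpoly p d R)) z = TT p (of_rat (d^2-R)) z - of_rat (2*d*(d^2-R)^((p-1) div 2))"
proof -
  define h where "h = (p - 1) div 2"
  have "poly (mq (fpoly p d R)) z =
     (\<Sum>j\<le>h. of_rat ((-1)^j * (of_nat p / of_nat (p - j)) * of_nat ((p - j) choose j) * (d^2-R)^j) * z^(p - 2*j))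
     - of_rat (2*d*(d^2-R)^h)"
    unfolding fpoly_def Let_def h_def[symmetric]
    by (simp add: mq_diff mq_sum mq_monom mq_const poly_sum poly_monom)
  also have "(\<Sum>j\<le>h. of_rat ((-1)^j * (of_nat p / of_nat (p - j)) * of_nat ((p - j) choose j) * (d^2-R)^j) * z^(p - 2*j))
     = (\<Sum>j\<le>h. (-1)^j * cc p j * (of_rat (d^2-R))^j * z^(p - 2*j))"
    by (rule sum.cong) (simp_all add: cc_def of_rat_mult of_rat_divide of_rat_power)
  also have "\<dots> = TT p (of_rat (d^2-R)) z"
    unfolding TT_def
  proof (rule sum.mono_neutral_left)
    show "\<forall>i\<in>{..p} - {..h}. (-1)^i * cc p i * (of_rat (d^2-R))^i * z^(p - 2*i) = 0"
    proof
      fix i assume "i \<in> {..p} - {..h}"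
      then have "p < 2 * i" using assms unfolding h_def by (auto elim!: oddE)
      then show "(-1)^i * cc p i * (of_rat (d^2-R))^i * z^(p - 2*i) = 0" by (simp add: cc_zero)
    qed
  qed (auto simp: h_def)
  finally show ?thesis unfolding h_def .
qed



definition KK :: "complex \<Rightarrow> complex set" where
  "KK s = {of_rat a + of_rat b * s | a b. True}"

definition Kp :: "complex \<Rightarrow> complex poly \<Rightarrow> bool" where
  "Kp s P \<longleftrightarrow> (\<forall>i. coeff P i \<in> KK s)"

locale qext =
  fixes s :: complex and R :: rat
  assumes s2: "s^2 = of_rat R" and nsq: "\<not> (\<exists>r::rat. R = r^2)"
begin

lemma KK_rat[simp]: "of_rat x \<in> KK s"
  unfolding KK_def by (rule CollectI, rule exI[of _ x], rule exI[of _ 0]) simp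

lemma KK_0[simp]: "0 \<in> KK s" using KK_rat[of 0] by simp
lemma KK_1[simp]: "1 \<in> KK s" using KK_rat[of 1] by simp
lemma KK_s[simp]: "s \<in> KK s"
  unfolding KK_def by (rule CollectI, rule exI[of _ 0], rule exI[of _ 1]) simp

lemma KKI: "x = of_rat a + of_rat b * s \<Longrightarrow> x \<in> KK s"
  unfolding KK_def by blast

lemma KKE: "x \<in> KK s \<Longrightarrow> (\<And>a b. x = of_rat a + of_rat b * s \<Longrightarrow> P) \<Longrightarrow> P"
  unfolding KK_def by blast

lemma KK_add[simp]: "x \<in> KK s \<Longrightarrow> y \<in> KK s \<Longrightarrow> x + y \<in> KK s"
proof -
  assume "x \<in> KK s" "y \<in> KK s"
  then obtain a b a' b' where "x = of_rat a + of_rat b * s" "y = of_rat a' + of_rat b' * s"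
    by (meson KKE)
  then show ?thesis by (intro KKI[of _ "a+a'" "b+b'"]) (simp add: of_rat_add algebra_simps)
qed

lemma KK_uminus[simp]: "x \<in> KK s \<Longrightarrow> - x \<in> KK s"
proof -
  assume "x \<in> KK s"
  then obtain a b where "x = of_rat a + of_rat b * s" by (meson KKE)
  then show ?thesis by (intro KKI[of _ "-a" "-b"]) (simp add: of_rat_minus algebra_simps)
qed

lemma KK_diff[simp]: "x \<in> KK s \<Longrightarrow> y \<in> KK s \<Longrightarrow> x - y \<in> KK s"
  using KK_add[of x "-y"] by simp

lemma KK_mult[simp]: "x \<in> KK s \<Longrightarrow> y \<in> KK s \<Longrightarrow> x * y \<in> KK s"
proof -
  assume "x \<in> KK s" "y \<in> KK s"
  then obtain a b a' b' where xy: "x = of_rat a + of_rat b * s" "y = of_rat a' + of_rat b' * s"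
    by (meson KKE)
  have ss: "s * s = of_rat R" using s2 by (simp add: power2_eq_square)
  have "x * y = of_rat a * of_rat a' + (of_rat a * of_rat b' + of_rat b * of_rat a') * s + of_rat b * of_rat b' * (s * s)"
    unfolding xy by (simp add: algebra_simps)
  also have "\<dots> = of_rat (a*a' + R*b*b') + of_rat (a*b' + b*a') * s"
    unfolding ss by (simp add: of_rat_add of_rat_mult algebra_simps)
  finally show ?thesis by (rule KKI)
qed

lemma norm_nz: "a \<noteq> 0 \<or> b \<noteq> 0 \<Longrightarrow> a^2 - R * b^2 \<noteq> 0"
proof
  assume ab: "a \<noteq> 0 \<or> b \<noteq> 0" and e: "a^2 - R * b^2 = 0"
  show False
  proof (cases "b = 0")
    case True then show False using ab e by simp
  next
    case False
    then have "R = (a/b)^2" using e by (simp add: field_simps power2_eq_square)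
    then show False using nsq by blast
  qed
qed

lemma s_irr: "s \<noteq> of_rat q"
proof
  assume "s = of_rat q"
  then have "of_rat R = (of_rat (q^2) :: complex)" using s2 by (simp add: of_rat_power)
  then have "R = q^2" by (simp only: of_rat_eq_iff)
  then show False using nsq by blast
qed

lemma KK_unique:
  assumes "of_rat a + of_rat b * s = of_rat a' + of_rat b' * s"
  shows "a = a' \<and> b = b'"
proof (cases "b = b'")
  case True then show ?thesis using assms by (simp add: of_rat_eq_iff)
next
  case False
  then have "s = of_rat ((a - a') / (b' - b))" using assms
    by (simp add: of_rat_divide of_rat_diff field_simps)
  then show ?thesis using s_irr by blast
qed

lemma KK_inverse[simp]: "x \<in> KK s \<Longrightarrow> inverse x \<in> KK s"
proof -
  assume "x \<in> KK s"
  then obtain a b where x: "x = of_rat a + of_rat b * s" unfolding KK_def by blast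
  show ?thesis
  proof (cases "a = 0 \<and> b = 0")
    case True then show ?thesis using x by simp
  next
    case False
    define N where "N = a^2 - R*b^2"
    have N: "N \<noteq> 0" using norm_nz False unfolding N_def by blast
    have ss: "s * s = of_rat R" using s2 by (simp add: power2_eq_square)
    have "x * (of_rat a - of_rat b * s) = of_rat a * of_rat a - of_rat b * of_rat b * (s * s)"
      unfolding x by (simp add: algebra_simps)
    also have "\<dots> = of_rat N" unfolding ss N_def by (simp add: of_rat_diff of_rat_mult power2_eq_square)
    finally have h: "x * (of_rat a - of_rat b * s) = of_rat N" .
    have "x * ((of_rat a - of_rat b * s) / of_rat N) = 1" using h N by simp
    then have "inverse x = (of_rat a - of_rat b * s) / of_rat N" by (rule inverse_unique)
    also have "\<dots> = of_rat (a / N) + of_rat (- b / N) * s"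
      by (simp add: of_rat_divide of_rat_minus diff_divide_distrib)
    finally show ?thesis by (rule KKI)
  qed
qed

lemma KK_divide[simp]: "x \<in> KK s \<Longrightarrow> y \<in> KK s \<Longrightarrow> x / y \<in> KK s"
  by (simp add: divide_inverse)

lemma KK_power[simp]: "x \<in> KK s \<Longrightarrow> x ^ n \<in> KK s"
  by (induction n) auto

lemma KK_sum: "(\<And>i. i \<in> A \<Longrightarrow> f i \<in> KK s) \<Longrightarrow> sum f A \<in> KK s"
  by (induction A rule: infinite_finite_induct) auto

lemma Kp_add[simp]: "Kp s P \<Longrightarrow> Kp s Q \<Longrightarrow> Kp s (P + Q)" by (simp add: Kp_def)
lemma Kp_diff[simp]: "Kp s P \<Longrightarrow> Kp s Q \<Longrightarrow> Kp s (P - Q)" by (simp add: Kp_def)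
lemma Kp_mult[simp]: "Kp s P \<Longrightarrow> Kp s Q \<Longrightarrow> Kp s (P * Q)"
  unfolding Kp_def coeff_mult by (auto intro!: KK_sum)
lemma Kp_smult[simp]: "c \<in> KK s \<Longrightarrow> Kp s P \<Longrightarrow> Kp s (smult c P)" by (simp add: Kp_def)
lemma Kp_pCons[simp]: "Kp s (pCons c P) \<longleftrightarrow> c \<in> KK s \<and> Kp s P"
  unfolding Kp_def by (auto simp: coeff_pCons split: nat.splits)
lemma Kp_0[simp]: "Kp s 0" by (simp add: Kp_def)
lemma Kp_1[simp]: "Kp s 1" by (simp add: Kp_def coeff_1)
lemma Kp_monom[simp]: "c \<in> KK s \<Longrightarrow> Kp s (monom c n)" by (simp add: Kp_def coeff_monom)
lemma Kp_power[simp]: "Kp s P \<Longrightarrow> Kp s (P ^ n)" by (induction n) auto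
lemma Kp_sum: "(\<And>i. i \<in> A \<Longrightarrow> Kp s (f i)) \<Longrightarrow> Kp s (sum f A)"
  by (induction A rule: infinite_finite_induct) auto
lemma Kp_mq[simp]: "Kp s (mq P)" by (simp add: Kp_def coeff_map_poly)

lemma Kdiv:
  assumes "Q \<noteq> 0" "Kp s Q"
  shows "Kp s P \<Longrightarrow> \<exists>m r. Kp s m \<and> Kp s r \<and> P = m * Q + r \<and> (r = 0 \<or> degree r < degree Q)"
proof (induction P rule: pCons_induct)
  case 0
  then show ?case by (intro exI[of _ 0]) auto
next
  case (pCons a P)
  then have a: "a \<in> KK s" and P: "Kp s P" by auto
  from pCons.IH[OF P] obtain m r where mr: "Kp s m" "Kp s r" "P = m * Q + r" "r = 0 \<or> degree r < degree Q"
    by blast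
  define T where "T = pCons a r"
  have dT: "degree T \<le> degree Q" unfolding T_def using mr(4) by (cases "r = 0") auto
  define c where "c = coeff T (degree Q) / lead_coeff Q"
  have KT: "Kp s T" unfolding T_def using mr(2) a by simp
  have c: "c \<in> KK s" unfolding c_def using KT assms(2) unfolding Kp_def by simp
  define r' where "r' = T - smult c Q"
  have Kr': "Kp s r'" unfolding r'_def T_def using mr(2) a c assms(2) by simp
  have cr': "coeff r' (degree Q) = 0" unfolding r'_def c_def using assms(1) by simp
  have dr': "degree r' \<le> degree Q" unfolding r'_def using dT
    by (meson degree_diff_le degree_smult_le le_trans)
  have r'': "r' = 0 \<or> degree r' < degree Q"
  proof (cases "r' = 0")
    case False
    then have "degree r' \<noteq> degree Q" using cr' by (metis leading_coeff_0_iff)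
    then show ?thesis using dr' by simp
  qed simp
  have eq: "pCons a P = (pCons 0 m + [:c:]) * Q + r'"
  proof -
    have "pCons a (m * Q + r) = pCons 0 m * Q + pCons a r" by simp
    moreover have "(pCons 0 m + [:c:]) * Q + (pCons a r - smult c Q) = pCons 0 m * Q + pCons a r"
      by (simp add: distrib_right)
    ultimately show ?thesis unfolding r'_def T_def mr(3) by simp
  qed
  show ?case
    by (rule exI[of _ "pCons 0 m + [:c:]"], rule exI[of _ r']) (use mr(1) c Kr' r'' eq in simp)
qed

lemma Keucl:
  "Kp s P \<Longrightarrow> Kp s Q \<Longrightarrow> \<exists>r u v. Kp s r \<and> r dvd P \<and> r dvd Q \<and> r = u * P + v * Q"
proof (induction "if Q = 0 then 0 else Suc (degree Q)" arbitrary: P Q rule: less_induct)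
  case less
  show ?case
  proof (cases "Q = 0")
    case True
    then show ?thesis using less.prems by (intro exI[of _ P] exI[of _ 1] exI[of _ 0]) auto
  next
    case False
    obtain m r where mr: "Kp s m" "Kp s r" "P = m * Q + r" "r = 0 \<or> degree r < degree Q"
      using Kdiv[OF False less.prems(2) less.prems(1)] by blast
    have "(if r = 0 then 0 else Suc (degree r)) < (if Q = 0 then 0 else Suc (degree Q))"
      using False mr(4) by auto
    from less.hyps[OF this less.prems(2) mr(2)] obtain g u v where
      g: "Kp s g" "g dvd Q" "g dvd r" "g = u * Q + v * r" by blast
    have "g dvd P" unfolding mr(3) using g by simp
    moreover have "g = v * P + (u - v * m) * Q" unfolding g(4) mr(3) by (simp add: algebra_simps)
    ultimately show ?thesis using g by blast
  qed
qed

end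


lemma odd_pow_inj:
  fixes x y :: rat
  assumes "odd n" "x^n = y^n"
  shows "x = y"
proof -
  have n: "0 < n" using assms(1) by (simp add: odd_pos)
  consider "0 \<le> x" "0 \<le> y" | "x < 0" "y < 0" | "0 \<le> x" "y < 0" | "x < 0" "0 \<le> y" by linarith
  then show ?thesis
  proof cases
    case 1 then show ?thesis using assms power_eq_iff_eq_base[OF n] by blast
  next
    case 2
    have "(-x)^n = (-y)^n" using assms by simp
    then show ?thesis using 2 power_eq_iff_eq_base[OF n, of "-x" "-y"] by simp
  next
    case 3 then show ?thesis using assms zero_le_odd_power[OF assms(1)] by (metis not_le)
  next
    case 4 then show ?thesis using assms zero_le_odd_power[OF assms(1)] by (metis not_le)
  qed
qed

lemma exists_y:
  fixes Dc t :: complex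
  assumes "Dc \<noteq> 0"
  shows "\<exists>y. y \<noteq> 0 \<and> y + Dc / y = t"
proof -
  obtain c where c: "c * c = t*t - 4*Dc"
    using power2_csqrt[of "t*t - 4*Dc"] by (metis power2_eq_square)
  define y where "y = (t + c) / 2"
  have "4 * (y^2 - t*y + Dc) = c * c - t * t + 4 * Dc"
    unfolding y_def by (simp add: power2_eq_square field_simps)
  then have "4 * (y^2 - t*y + Dc) = 0" unfolding c by simp
  then have q: "y^2 - t*y + Dc = 0" by (metis mult_eq_0_iff zero_neq_numeral)
  have y0: "y \<noteq> 0" using q assms by auto
  then have "y + Dc / y = t" using q by (simp add: field_simps power2_eq_square)
  then show ?thesis using y0 by blast
qed

definition phi :: "complex \<Rightarrow> rat \<times> rat \<Rightarrow> complex" where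
  "phi t x = of_rat (fst x) + of_rat (snd x) * t"

definition pm :: "rat \<Rightarrow> rat \<times> rat \<Rightarrow> rat \<times> rat \<Rightarrow> rat \<times> rat" where
  "pm R x y = (fst x * fst y + R * snd x * snd y, fst x * snd y + snd x * fst y)"

primrec pw :: "rat \<Rightarrow> rat \<times> rat \<Rightarrow> nat \<Rightarrow> rat \<times> rat" where
  "pw R x 0 = (1, 0)"
| "pw R x (Suc n) = pm R x (pw R x n)"

lemma phi_pm: "t * t = of_rat R \<Longrightarrow> phi t (pm R x y) = phi t x * phi t y"
  unfolding phi_def pm_def
  by (simp add: of_rat_add of_rat_mult algebra_simps)

lemma phi_pw: "t * t = of_rat R \<Longrightarrow> phi t (pw R x n) = phi t x ^ n"
proof (induction n)
  case 0 then show ?case by (simp add: phi_def)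
next
  case (Suc n) then show ?case by (simp only: pw.simps phi_pm power_Suc)
qed



locale mainloc = qext +
  fixes d :: rat and p :: nat
  assumes pp: "prime p" and p3: "p \<ge> 3"
begin

definition "Dr = d^2 - R"
definition "Dc = (of_rat Dr :: complex)"
definition "hh = (p - 1) div 2"
definition "al = of_rat (Dr^hh) * (of_rat d + s)"
definition "be = of_rat (Dr^hh) * (of_rat d - s)"

lemma podd: "odd p" using prime_odd_nat[OF pp] p3 by simp
lemma p_hh: "2 * hh + 1 = p" using podd unfolding hh_def by (auto elim!: oddE)

lemma Dr_nz: "Dr \<noteq> 0"
  using nsq unfolding Dr_def by auto
lemma Dc_nz: "Dc \<noteq> 0" using Dr_nz unfolding Dc_def by simp

lemma s_nz: "s \<noteq> 0" using s_irr[of 0] by simp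

lemma albe: "al * be = Dc^p"
proof -
  have "al * be = of_rat (Dr^hh) * of_rat (Dr^hh) * (of_rat d * of_rat d - s * s)"
    unfolding al_def be_def by (simp add: algebra_simps)
  also have "s * s = of_rat R" using s2 by (simp add: power2_eq_square)
  also have "(of_rat d * of_rat d - of_rat R :: complex) = Dc" unfolding Dc_def Dr_def
    by (simp add: of_rat_diff of_rat_mult power2_eq_square)
  also have "of_rat (Dr^hh) * of_rat (Dr^hh) * Dc = Dc^(2*hh+1)"
    unfolding Dc_def by (simp add: of_rat_power power_add mult_2)
  finally show ?thesis unfolding p_hh .
qed

lemma al_plus_be: "al + be = of_rat (2 * d * Dr^hh)"
  unfolding al_def be_def by (simp add: of_rat_mult of_rat_power algebra_simps)

lemma al_nz: "al \<noteq> 0" and be_nz: "be \<noteq> 0"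
  using albe Dc_nz by auto

lemma al_ne_be: "al \<noteq> be"
proof
  assume "al = be"
  then have "of_rat (Dr^hh) * (2 * s) = 0" unfolding al_def be_def by (simp add: algebra_simps)
  then show False using s_nz Dr_nz by (simp add: of_rat_power)
qed

lemma al_KK: "al \<in> KK s" unfolding al_def by simp

lemma root_iff:
  assumes y: "y \<noteq> 0"
  shows "poly (mq (fpoly p d R)) (y + Dc / y) = 0 \<longleftrightarrow> y^p = al \<or> y^p = be"
proof -
  have "poly (mq (fpoly p d R)) (y + Dc / y) = y^p + (Dc/y)^p - (al + be)"
    unfolding fpoly_eval[OF podd] al_plus_be Dc_def[symmetric]
    using dickson[OF y, of p Dc] p3 unfolding Dc_def Dr_def hh_def by simp
  moreover have "y^p * (y^p + (Dc/y)^p - (al + be)) = (y^p - al) * (y^p - be)"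
  proof -
    have "y^p * (Dc/y)^p = al * be" using albe y by (simp add: power_divide)
    then show ?thesis by (simp add: algebra_simps)
  qed
  moreover have "y^p \<noteq> 0" using y by simp
  ultimately show ?thesis
    by (metis (no_types, lifting) eq_iff_diff_eq_0 mult_eq_0_iff)
qed


lemma gamma_root:
  assumes gK: "ga \<in> KK s" and gp: "ga^p = al"
  shows "\<exists>z. poly (fpoly p d R) z = 0"
proof -
  obtain a0 b0 where g: "ga = of_rat a0 + of_rat b0 * s" using gK by (elim KKE)
  have ss: "s * s = of_rat R" using s2 by (simp add: power2_eq_square)
  have ss': "(-s) * (-s) = of_rat R" using ss by simp
  have "phi s (pw R (a0,b0) p) = ga^p" using phi_pw[OF ss, of "(a0,b0)" p] unfolding g phi_def by simp
  also have "\<dots> = phi s (Dr^hh * d, Dr^hh)" unfolding gp al_def phi_def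
    by (simp add: of_rat_mult algebra_simps)
  finally have "pw R (a0,b0) p = (Dr^hh * d, Dr^hh)"
    unfolding phi_def using KK_unique by (metis prod.collapse)
  then have "phi (-s) (a0,b0) ^ p = phi (-s) (Dr^hh * d, Dr^hh)"
    using phi_pw[OF ss', of "(a0,b0)" p] by simp
  also have "\<dots> = be" unfolding be_def phi_def by (simp add: of_rat_mult algebra_simps)
  finally have psp: "phi (-s) (a0,b0) ^ p = be" .
  define nu where "nu = a0^2 - R * b0^2"
  have gpsi: "ga * phi (-s) (a0,b0) = of_rat nu"
  proof -
    have "ga * phi (-s) (a0,b0) = of_rat a0 * of_rat a0 - of_rat b0 * of_rat b0 * (s * s)"
      unfolding g phi_def by (simp add: algebra_simps)
    then show ?thesis unfolding ss nu_def by (simp add: of_rat_diff of_rat_mult power2_eq_square)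
  qed
  have "(of_rat (nu^p) :: complex) = of_rat (Dr^p)"
  proof -
    have "(of_rat (nu^p) :: complex) = (ga * phi (-s) (a0,b0))^p" unfolding gpsi by (simp add: of_rat_power)
    also have "\<dots> = al * be" unfolding power_mult_distrib gp psp ..
    also have "\<dots> = of_rat (Dr^p)" unfolding albe Dc_def by (simp add: of_rat_power)
    finally show ?thesis .
  qed
  then have "nu^p = Dr^p" by (simp only: of_rat_eq_iff)
  then have nuD: "nu = Dr" using odd_pow_inj[OF podd] by blast
  have g0: "ga \<noteq> 0"
  proof
    assume "ga = 0"
    then have "ga^p = 0" using p3 by simp
    then show False using gp al_nz by simp
  qed
  have psi: "phi (-s) (a0,b0) = Dc / ga" using gpsi nuD g0 unfolding Dc_def by (simp add: field_simps)
  have th: "ga + Dc / ga = of_rat (2 * a0)"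
  proof -
    have "ga + Dc / ga = ga + phi (-s) (a0,b0)" using psi by simp
    also have "\<dots> = of_rat (2 * a0)" unfolding g phi_def by (simp add: of_rat_mult)
    finally show ?thesis .
  qed
  have "poly (mq (fpoly p d R)) (ga + Dc / ga) = 0" using root_iff[OF g0] gp by simp
  then have "of_rat (poly (fpoly p d R) (2 * a0)) = (0::complex)" unfolding th poly_mq .
  then have "poly (fpoly p d R) (2 * a0) = 0" by simp
  then show ?thesis by blast
qed

lemma red_root:
  assumes gdvd: "g dvd fpoly p d R" and k1: "1 \<le> degree g" and kp: "degree g < p"
  shows "\<exists>z. poly (fpoly p d R) z = 0"
proof -
  define k where "k = degree g"
  define gc where "gc = mq g"
  have dgc: "degree gc = k" unfolding gc_def k_def by (simp add: degree_map_poly)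
  define G where "G = (\<Sum>i\<le>k. smult (coeff gc i) (monom 1 (k-i) * [:Dc,0,1:]^i))"
  have DcK: "Dc \<in> KK s" unfolding Dc_def by simp
  have KG: "Kp s G" unfolding G_def
    by (intro Kp_sum Kp_smult Kp_mult Kp_monom Kp_power) (auto simp: gc_def coeff_map_poly DcK)
  have polyG: "poly G y = y^k * poly gc (y + Dc/y)" if y: "y \<noteq> 0" for y
  proof -
    have "poly G y = (\<Sum>i\<le>k. coeff gc i * (y^(k-i) * (Dc + y*y)^i))"
      unfolding G_def by (simp add: poly_sum poly_monom)
    also have "\<dots> = (\<Sum>i\<le>k. y^k * (coeff gc i * (y + Dc/y)^i))"
    proof (rule sum.cong[OF refl])
      fix i assume "i \<in> {..k}"
      then have ik: "i \<le> k" by simp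
      have "Dc + y*y = y * (y + Dc/y)" using y by (simp add: field_simps)
      then have "(Dc + y*y)^i = y^i * (y + Dc/y)^i" by (simp add: power_mult_distrib)
      moreover have "y^(k-i) * y^i = y^k" using ik by (simp add: power_add[symmetric])
      ultimately show "coeff gc i * (y^(k-i) * (Dc + y*y)^i) = y^k * (coeff gc i * (y + Dc/y)^i)"
        by (metis (no_types, lifting) mult.assoc mult.left_commute)
    qed
    also have "\<dots> = y^k * poly gc (y + Dc/y)"
      unfolding poly_altdef[of gc] dgc sum_distrib_left ..
    finally show ?thesis .
  qed
  have degG: "degree G \<le> 2 * k"
    unfolding G_def
  proof (rule degree_sum_le)
    fix i assume "i \<in> {..k}"
    then have ik: "i \<le> k" by simp
    have "degree (smult (coeff gc i) (monom 1 (k-i) * [:Dc,0,1:]^i)) \<le> degree (monom (1::complex) (k-i)) + degree ([:Dc,0,1:]^i)"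
      by (meson degree_mult_le degree_smult_le order_trans)
    also have "\<dots> \<le> (k - i) + 2 * i"
      using degree_monom_le[of "1::complex" "k-i"] degree_power_le[of "[:Dc,0,1:]" i] by simp
    also have "\<dots> \<le> 2 * k" using ik by simp
    finally show "degree (smult (coeff gc i) (monom 1 (k-i) * [:Dc,0,1:]^i)) \<le> 2 * k" .
  qed simp
  have gc_nz: "gc \<noteq> 0" using k1 dgc unfolding k_def by auto
  have G_nz: "G \<noteq> 0"
  proof
    assume G0: "G = 0"
    have "poly gc t = 0" for t
    proof -
      obtain y where y: "y \<noteq> 0" "y + Dc / y = t" using exists_y[OF Dc_nz] by blast
      have "y^k * poly gc t = 0" using polyG[OF y(1)] y(2) G0 by simp
      then show ?thesis using y(1) by simp
    qed
    then show False using gc_nz poly_all_0_iff_0 by blast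
  qed
  define X where "X = monom (1::complex) p - [:al:]"
  have KX: "Kp s X" unfolding X_def using al_KK by simp
  have polyX: "poly X y = y^p - al" for y unfolding X_def by (simp add: poly_monom)
  have z0: "(0::complex)^p = 0" using p3 by simp
  have X_nz: "X \<noteq> 0" using polyX[of 0] al_nz z0 by auto
  have dX: "degree X = p"
  proof -
    have "X = monom 1 p + [:-al:]" unfolding X_def by simp
    also have "degree \<dots> = degree (monom (1::complex) p)"
      by (rule degree_add_eq_left) (use p3 in \<open>simp add: degree_monom_eq\<close>)
    finally show ?thesis by (simp add: degree_monom_eq)
  qed
  obtain r u v where r: "Kp s r" "r dvd G" "r dvd X" "r = u * G + v * X"
    using Keucl[OF KG KX] by blast
  obtain y0 where y0: "y0 \<noteq> 0" "y0^p = al" "poly gc (y0 + Dc/y0) = 0"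
  proof -
    have "\<not> constant (poly gc)" using dgc k1 unfolding k_def by (simp add: constant_degree)
    then obtain th where th: "poly gc th = 0" using fundamental_theorem_of_algebra by blast
    obtain q where fq: "fpoly p d R = g * q" using gdvd by (elim dvdE)
    have "poly (mq (fpoly p d R)) th = 0" unfolding fq mq_mult using th gc_def by simp
    obtain y where y: "y \<noteq> 0" "y + Dc / y = th" using exists_y[OF Dc_nz] by blast
    have "y^p = al \<or> y^p = be" using root_iff[OF y(1)] y(2) \<open>poly (mq (fpoly p d R)) th = 0\<close> by simp
    then show ?thesis
    proof
      assume "y^p = al" then show ?thesis using that y th by blast
    next
      assume yb: "y^p = be"
      have y': "Dc / y \<noteq> 0" using y Dc_nz by simp
      have "(Dc/y)^p = Dc^p / be" using yb by (simp add: power_divide)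
      also have "\<dots> = al" using albe be_nz by (simp add: field_simps)
      finally have "(Dc/y)^p = al" .
      moreover have "Dc/y + Dc/(Dc/y) = th" using y Dc_nz by (simp add: algebra_simps)
      ultimately show ?thesis using that y' th by blast
    qed
  qed
  have r0: "poly r y0 = 0"
    using r(4) polyG[OF y0(1)] y0 polyX[of y0] by simp
  have r_nz: "r \<noteq> 0" using r(3) X_nz by auto
  have dr1: "1 \<le> degree r"
  proof (rule ccontr)
    assume "\<not> 1 \<le> degree r"
    then have "degree r = 0" by simp
    then obtain c where "r = [:c:]" by (metis degree_eq_zeroE)
    then show False using r0 r_nz by simp
  qed
  have drp: "degree r < p"
  proof (rule ccontr)
    assume "\<not> degree r < p"
    moreover have "degree r \<le> p" using dvd_imp_degree_le[OF r(3) X_nz] dX by simp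
    ultimately have drp: "degree r = degree X" using dX by simp
    obtain q where q: "X = r * q" using r(3) by (elim dvdE)
    have "q \<noteq> 0" using q X_nz by auto
    then have "degree q = 0" using q drp r_nz by (simp add: degree_mult_eq)
    then obtain c where c: "q = [:c:]" by (metis degree_eq_zeroE)
    then have "c \<noteq> 0" using \<open>q \<noteq> 0\<close> by simp
    have "r = X * [:inverse c:]" using q c \<open>c \<noteq> 0\<close> by (simp add: mult.assoc)
    then have "X dvd r" by (metis dvd_triv_left)
    then have XG: "X dvd G" using r(2) by (rule dvd_trans)
    \<comment> \<open>too many roots\<close>
    define A where "A = {y::complex. y^p = al}"
    have cardA: "card A = p" unfolding A_def using card_nth_roots[OF al_nz] p3 by simp
    have A0: "0 \<notin> A" unfolding A_def using al_nz z0 by (metis mem_Collect_eq)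
    have GA: "poly G y = 0" if "y \<in> A" for y
    proof -
      obtain w where "G = X * w" using XG by (elim dvdE)
      then show ?thesis using that polyX[of y] unfolding A_def by simp
    qed
    have GA': "poly G (Dc / y) = 0" if yA: "y \<in> A" for y
    proof -
      have y: "y \<noteq> 0" using yA A0 by auto
      have "poly gc (y + Dc/y) = 0" using GA[OF yA] polyG[OF y] y by simp
      moreover have "Dc / y \<noteq> 0" using y Dc_nz by simp
      moreover have "Dc/y + Dc/(Dc/y) = y + Dc/y" using y Dc_nz by simp
      ultimately show ?thesis using polyG[of "Dc/y"] by (simp add: add.commute)
    qed
    define B where "B = (\<lambda>y. Dc / y) ` A"
    have injB: "inj_on (\<lambda>y. Dc / y) A"
      by (rule inj_onI) (use A0 Dc_nz in \<open>auto simp: field_simps\<close>)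
    have cardB: "card B = p" unfolding B_def using card_image[OF injB] cardA by simp
    have disj: "A \<inter> B = {}"
    proof (rule ccontr)
      assume "A \<inter> B \<noteq> {}"
      then obtain y where yA: "y \<in> A" and "Dc / y \<in> A" unfolding B_def by auto
      then have "(Dc/y)^p = al" unfolding A_def by simp
      moreover have "(Dc/y)^p = be"
      proof -
        have "(Dc/y)^p = Dc^p / al" using yA unfolding A_def by (simp add: power_divide)
        also have "\<dots> = be" using albe al_nz by (simp add: field_simps)
        finally show ?thesis .
      qed
      ultimately show False using al_ne_be by simp
    qed
    have finA: "finite A" using cardA p3 card.infinite by fastforce
    have "card (A \<union> B) = 2 * p"
      using card_Un_disjoint[OF finA _ disj] cardA cardB finA unfolding B_def by simp
    moreover have "A \<union> B \<subseteq> {x. poly G x = 0}" using GA GA' unfolding B_def by auto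
    ultimately have "2 * p \<le> card {x. poly G x = 0}"
      by (metis card_mono poly_roots_finite G_nz)
    also have "\<dots> \<le> degree G" by (rule card_poly_roots_bound[OF G_nz])
    also have "\<dots> < 2 * p" using degG kp unfolding k_def by simp
    finally show False by simp
  qed
  define m where "m = degree r"
  define lc where "lc = lead_coeff r"
  have lcK: "lc \<in> KK s" using r(1) unfolding lc_def Kp_def by simp
  have lc0: "lc \<noteq> 0" using r_nz unfolding lc_def by simp
  obtain root where rr: "smult (lead_coeff r) (\<Prod>i<degree r. [:-root i, 1:]) = r"
    using complex_poly_decompose' by blast
  have polyr: "poly r x = lc * (\<Prod>i<m. x - root i)" for x
  proof -
    have "poly r x = poly (smult (lead_coeff r) (\<Prod>i<degree r. [:-root i, 1:])) x" by (simp only: rr)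
    also have "\<dots> = lc * (\<Prod>i<m. x - root i)" by (simp add: poly_prod lc_def m_def)
    finally show ?thesis .
  qed
  have rootp: "root i ^ p = al" if "i < m" for i
  proof -
    have "poly r (root i) = 0" unfolding polyr using that by (auto intro: prod_zero)
    moreover obtain w where "X = r * w" using r(3) by (elim dvdE)
    ultimately have "poly X (root i) = 0" by simp
    then show ?thesis unfolding polyX by simp
  qed
  define w where "w = (\<Prod>i<m. root i)"
  have wp: "w^p = al^m"
  proof -
    have "w^p = (\<Prod>i<m. root i ^ p)" unfolding w_def by (simp add: prod_power_distrib)
    also have "\<dots> = (\<Prod>i<m. al)" by (rule prod.cong) (auto simp: rootp)
    finally show ?thesis by simp
  qed
  have wK: "w \<in> KK s"
  proof -
    have "coeff r 0 = lc * (\<Prod>i<m. (-1) * root i)" unfolding poly_0_coeff_0[symmetric] polyr by simp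
    also have "\<dots> = lc * (-1)^m * w" unfolding prod.distrib w_def by simp
    finally have "w = coeff r 0 / (lc * (-1)^m)" using lc0 by (simp add: field_simps)
    moreover have "coeff r 0 \<in> KK s" using r(1) unfolding Kp_def by simp
    ultimately show ?thesis using lcK by simp
  qed
  have m0: "m \<noteq> 0" and mp: "m < p" using dr1 drp unfolding m_def by auto
  have "\<not> p dvd m" using m0 mp by (auto dest: dvd_imp_le)
  then have "coprime p m" using prime_imp_coprime[OF pp] by blast
  then have gcd1: "gcd m p = 1" by (simp add: coprime_iff_gcd_eq_1 gcd.commute)
  obtain x y where xy: "m * x = p * y + 1" using bezout_nat[OF m0, of p] gcd1 by auto
  define ga where "ga = w^x / al^y"
  have gaK: "ga \<in> KK s" unfolding ga_def using wK al_KK by simp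
  have e1: "(w^x)^p = (w^p)^x" by (metis mult.commute power_mult)
  have e2: "(al^y)^p = (al^p)^y" by (metis mult.commute power_mult)
  have "ga^p = (w^x)^p / (al^y)^p" unfolding ga_def by (simp add: power_divide)
  also have "\<dots> = (w^p)^x / (al^p)^y" by (simp only: e1 e2)
  also have "\<dots> = al^(m*x) / al^(p*y)" unfolding wp by (simp add: power_mult)
  also have "\<dots> = al" unfolding xy using al_nz by simp
  finally show ?thesis using gamma_root[OF gaK] by blast
qed

end


lemma fpoly_deg: "degree (fpoly p d R) \<le> p"
  unfolding fpoly_def Let_def
proof (intro order.trans[OF degree_diff_le] max.boundedI degree_sum_le)
  fix j show "degree (monom ((-1)^j * (of_nat p / of_nat (p - j)) * of_nat ((p - j) choose j) * (d^2-R)^j) (p - 2*j)) \<le> p"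
    by (rule order.trans[OF degree_monom_le]) simp
qed auto

context mainloc begin

lemma f_croot: "\<exists>th. poly (mq (fpoly p d R)) th = 0"
proof -
  have c: "card {z::complex. z^p = al} = p" using card_nth_roots[OF al_nz, of p] p3 by simp
  have "{z::complex. z^p = al} \<noteq> {}"
  proof
    assume "{z::complex. z^p = al} = {}"
    then show False using c p3 by simp
  qed
  then obtain y where y: "y^p = al" by auto
  have y0: "y \<noteq> 0"
  proof
    assume "y = 0"
    then have "y^p = 0" using p3 by simp
    then show False using y al_nz by simp
  qed
  show ?thesis using root_iff[OF y0] y by blast
qed

end

theorem theorem4:
  fixes p :: nat and d R :: rat
  assumes "prime p" and "p \<ge> 3"
    and "d \<noteq> 0"
    and "\<not> (\<exists>r::rat. R = r^2)"
    and "\<forall>z::rat. poly (fpoly p d R) z \<noteq> 0"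
  shows "irreducible (fpoly p d R)"
proof -
  interpret mainloc "csqrt (of_rat R)" R d p
    by unfold_locales (use assms in auto)
  define f where "f = fpoly p d R"
  have f0: "f \<noteq> 0" using assms(5) unfolding f_def by auto
  have df: "degree f \<ge> 1"
  proof (rule ccontr)
    assume "\<not> degree f \<ge> 1"
    then have "degree f = 0" by simp
    then obtain c where c: "f = [:c:]" by (elim degree_eq_zeroE)
    obtain th where "poly (mq f) th = 0" using f_croot unfolding f_def by blast
    then have "c = 0" using c by (simp add: map_poly_pCons)
    then show False using f0 c by simp
  qed
  have dfp: "degree f \<le> p" unfolding f_def by (rule fpoly_deg)
  show ?thesis unfolding f_def[symmetric]
  proof (rule irreducibleI)
    show "f \<noteq> 0" by fact
    show "\<not> f dvd 1" using df is_unit_iff_degree[OF f0] by simp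
    fix a b assume ab: "f = a * b"
    show "a dvd 1 \<or> b dvd 1"
    proof (rule ccontr)
      assume nu: "\<not> (a dvd 1 \<or> b dvd 1)"
      have a0: "a \<noteq> 0" and b0: "b \<noteq> 0" using ab f0 by auto
      have da: "degree a \<ge> 1" using nu is_unit_iff_degree[OF a0] by simp
      have db: "degree b \<ge> 1" using nu is_unit_iff_degree[OF b0] by simp
      have "degree f = degree a + degree b" using ab a0 b0 by (simp add: degree_mult_eq)
      then have "degree a < p" using db dfp by simp
      moreover have "a dvd fpoly p d R" using ab unfolding f_def by simp
      ultimately obtain z where "poly (fpoly p d R) z = 0" using red_root da by blast
      then show False using assms(5) by blast
    qed
  qed
qed

end
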